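(* Let $d\ge 2$ and $S\in\mathcal{S}^d(1)$ be such that the barycentric coordinates of its unique interior integral point with respect to the vertices of $S$ are, up to ordering, \[ \Big(\tfrac1{s_1},\ldots,\tfrac1{s_{d-1}},\tfrac1{2(s_d-1)},\tfrac1{2(s_d-1)}\Big). \] Then there exist a positive integer $h$ and $a\in\{0,1,\ldots,h-1\}^{d-1}$ such that $S$ is unimodularly equivalent to $\operatorname{conv}\big((T^{d-1}_{1,d}\times\{0\})\cup\{(a,h),-(a,h)\}\big)$.
   Context: The Sylvester sequence: $s_1 = 2$, $s_i = \prod_{j=1}^{i-1} s_j + 1$ for $i\ge2$. $\mathcal{S}^d(1)$: $d$-dimensional simplices in $\mathbb{R}^d$ with integral vertices and exactly one interior integral point. $T^{d-1}_{1,d} := \operatorname{conv}(\{0, s_1e_1,\ldots,s_{d-1}e_{d-1}\})\subseteq\mathbb{R}^{d-1}$. Unimodular equivalence: existence of an affine bijection of $\mathbb{R}^d$ preserving $\mathbb{Z}^d$ mapping one onto the other. *)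

theory Defs
  imports "HOL-Analysis.Analysis"
begin

text \<open>Sylvester sequence, indexed from 1: s 1 = 2, s i = (prod of s j, 1 <= j < i) + 1.
  (The value at index 0 is irrelevant.)\<close>
fun sylvester :: "nat \<Rightarrow> nat" where
  "sylvester n = (if n \<le> 1 then 2 else prod_list (map sylvester [1..<n]) + 1)"

text \<open>Points of R^d are represented as functions nat => real whose coordinates
  with index >= d vanish; coordinates are indexed 0..d-1.\<close>
type_synonym pt = "nat \<Rightarrow> real"

definition Rd :: "nat \<Rightarrow> pt set" where
  "Rd d = {x. \<forall>i\<ge>d. x i = 0}"

definition Zd :: "nat \<Rightarrow> pt set" where
  "Zd d = {x \<in> Rd d. \<forall>i<d. x i \<in> \<int>}"

definition conv :: "pt set \<Rightarrow> pt set" where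
  "conv V = {x. \<exists>F c. finite F \<and> F \<subseteq> V \<and> F \<noteq> {} \<and> (\<forall>v\<in>F. 0 \<le> c v) \<and>
                    sum c F = 1 \<and> x = (\<lambda>i. \<Sum>v\<in>F. c v * v i)}"

definition interior_d :: "nat \<Rightarrow> pt set \<Rightarrow> pt set" where
  "interior_d d S = {x \<in> Rd d. \<exists>e>0. \<forall>y\<in>Rd d. (\<Sum>i<d. (y i - x i)\<^sup>2) < e\<^sup>2 \<longrightarrow> y \<in> S}"

definition aff_indep :: "nat \<Rightarrow> (nat \<Rightarrow> pt) \<Rightarrow> bool" where
  "aff_indep d v \<longleftrightarrow> (\<forall>c::nat \<Rightarrow> real.
      (\<forall>i. (\<Sum>k\<in>{1..d}. c k * (v k i - v 0 i)) = 0) \<longrightarrow> (\<forall>k\<in>{1..d}. c k = 0))"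

definition lattice_simplex :: "nat \<Rightarrow> (nat \<Rightarrow> pt) \<Rightarrow> bool" where
  "lattice_simplex d v \<longleftrightarrow> (\<forall>k\<le>d. v k \<in> Zd d) \<and> aff_indep d v"

definition is_bary :: "nat \<Rightarrow> (nat \<Rightarrow> pt) \<Rightarrow> pt \<Rightarrow> (nat \<Rightarrow> real) \<Rightarrow> bool" where
  "is_bary d v z b \<longleftrightarrow> (\<Sum>k\<le>d. b k) = 1 \<and> (\<forall>i. z i = (\<Sum>k\<le>d. b k * v k i))"

definition unimod_equiv :: "nat \<Rightarrow> pt set \<Rightarrow> pt set \<Rightarrow> bool" where
  "unimod_equiv d S T \<longleftrightarrow> (\<exists>f::pt \<Rightarrow> pt.
      bij_betw f (Rd d) (Rd d) \<and>
      (\<exists>(A::nat \<Rightarrow> nat \<Rightarrow> real) (b::pt). \<forall>x\<in>Rd d. \<forall>i<d. f x i = (\<Sum>j<d. A i j * x j) + b i) \<and>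
      f ` Zd d = Zd d \<and> f ` S = T)"

definition target_bary :: "nat \<Rightarrow> nat \<Rightarrow> real" where
  "target_bary d j = (if j < d - 1 then 1 / real (sylvester (j + 1))
                      else 1 / (2 * (real (sylvester d) - 1)))"

text \<open>Vertices of T^{d-1}_{1,d} x {0} in R^d: the origin and s_i e_i for i = 1..d-1
  (e_i is the coordinate with index i-1).\<close>
definition T_verts :: "nat \<Rightarrow> pt set" where
  "T_verts d = insert (\<lambda>_. 0)
     ((\<lambda>i. (\<lambda>j. if j = i - 1 then real (sylvester i) else 0)) ` {1..d-1})"

definition ah_point :: "nat \<Rightarrow> (nat \<Rightarrow> int) \<Rightarrow> int \<Rightarrow> pt" where
  "ah_point d a h = (\<lambda>j. if j < d - 1 then real_of_int (a j) else if j = d - 1 then real_of_int h else 0)"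

end

theory Submission imports Defs "Jordan_Normal_Form.Determinant" begin

declare sylvester.simps[simp del]

lemma syl_eq: "n \<ge> 1 \<Longrightarrow> sylvester n = (\<Prod>j\<in>{1..<n}. sylvester j) + 1"
proof -
  assume n: "n \<ge> 1"
  show ?thesis
  proof (cases "n = 1")
    case True thus ?thesis by (simp add: sylvester.simps)
  next
    case False
    hence "\<not> n \<le> 1" using n by simp
    hence "sylvester n = prod_list (map sylvester [1..<n]) + 1"
      by (subst sylvester.simps) simp
    also have "prod_list (map sylvester [1..<n]) = (\<Prod>j\<in>{1..<n}. sylvester j)"
      using prod.distinct_set_conv_list[of "[1..<n]" sylvester] by simp
    finally show ?thesis .
  qed
qed

lemma syl_ge2: "sylvester n \<ge> 2"
proof (cases "n \<le> 1")
  case True thus ?thesis by (simp add: sylvester.simps)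
next
  case False
  hence "sylvester n = (\<Prod>j\<in>{1..<n}. sylvester j) + 1" by (intro syl_eq) simp
  moreover have "(\<Prod>j\<in>{1..<n}. sylvester j) \<ge> 1"
  proof (rule prod_ge_1)
    fix j show "1 \<le> sylvester j"
    proof (induction j rule: less_induct)
      case (less j)
      show ?case
      proof (cases "j \<le> 1")
        case True thus ?thesis by (simp add: sylvester.simps)
      next
        case False thus ?thesis by (subst syl_eq) auto
      qed
    qed
  qed
  ultimately show ?thesis by simp
qed

definition Kc :: "nat \<Rightarrow> nat \<Rightarrow> nat" where
  "Kc d n = (\<Prod>j\<in>{1..<d} - {n}. sylvester j)"

lemma syl_P_split: "n \<in> {1..<d} \<Longrightarrow> (\<Prod>j\<in>{1..<d}. sylvester j) = sylvester n * Kc d n"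
  unfolding Kc_def by (simp add: prod.remove)

lemma syl_dvd_Kc: "n \<in> {1..<d} \<Longrightarrow> n' \<in> {1..<d} \<Longrightarrow> n \<noteq> n' \<Longrightarrow> sylvester n' dvd Kc d n"
  unfolding Kc_def by (rule dvd_prodI) auto

lemma syl_Kc_mod: assumes n: "n \<in> {1..<d}" shows "sylvester n dvd Kc d n + 1"
proof -
  let ?s = "sylvester n"
  have s2: "?s \<ge> 2" by (rule syl_ge2)
  have set: "{1..<d} - {n} = {1..<n} \<union> {n<..<d}" using n by auto
  have "Kc d n = (\<Prod>j\<in>{1..<n}. sylvester j) * (\<Prod>j\<in>{n<..<d}. sylvester j)"
    unfolding Kc_def set by (rule prod.union_disjoint) auto
  also have "(\<Prod>j\<in>{1..<n}. sylvester j) = ?s - 1" using syl_eq[of n] n by simp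
  finally have K: "Kc d n = (?s - 1) * (\<Prod>j\<in>{n<..<d}. sylvester j)" .
  have "\<forall>j\<in>{n<..<d}. sylvester j mod ?s = 1"
  proof
    fix j assume j: "j \<in> {n<..<d}"
    have "sylvester j = (\<Prod>i\<in>{1..<j}. sylvester i) + 1" using j n by (intro syl_eq) auto
    moreover have "?s dvd (\<Prod>i\<in>{1..<j}. sylvester i)" using j n by (intro dvd_prodI) auto
    ultimately show "sylvester j mod ?s = 1" using s2 by (auto simp: mod_Suc)
  qed
  hence "(\<Prod>j\<in>{n<..<d}. sylvester j) mod ?s = 1"
    using mod_prod_eq[of "\<lambda>j. sylvester j" ?s "{n<..<d}", symmetric] s2 by simp
  hence "Kc d n mod ?s = ((?s - 1) * 1) mod ?s" unfolding K by (metis mod_mult_right_eq)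
  hence "Kc d n mod ?s = ?s - 1" using s2 by simp
  hence "(Kc d n + 1) mod ?s = 0" using s2 by (metis Suc_diff_1 Suc_eq_plus1 less_le_trans mod_Suc mod_self pos2)
  thus ?thesis by auto
qed

lemma sum1d: "(\<Sum>k\<in>{1..d}. f k) = (\<Sum>j<d. f (Suc j))"
  using sum.atLeast1_atMost_eq[of f d] by simp

lemma aff_surj:
  assumes aff: "aff_indep d v" and vR: "\<forall>k\<le>d. v k \<in> Rd d" and x: "x \<in> Rd d"
  shows "\<exists>c. \<forall>i. x i - v 0 i = (\<Sum>k\<in>{1..d}. c k * (v k i - v 0 i))"
proof -
  define A :: "real mat" where "A = mat d d (\<lambda>(i,j). v (Suc j) i - v 0 i)"
  have Ac: "A \<in> carrier_mat d d" unfolding A_def by simp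
  have Av: "(A *\<^sub>v c) $ i = (\<Sum>k\<in>{1..d}. c $ (k - 1) * (v k i - v 0 i))"
    if "i < d" "c \<in> carrier_vec d" for c i
    using that unfolding A_def sum1d
    by (auto simp: scalar_prod_def atLeast0LessThan mult.commute intro!: sum.cong)
  have vz: "v k i = 0" if "k \<le> d" "i \<ge> d" for k i
    using vR that unfolding Rd_def by auto
  have "det A \<noteq> 0"
  proof
    assume "det A = 0"
    then obtain c where c: "c \<in> carrier_vec d" "c \<noteq> 0\<^sub>v d" "A *\<^sub>v c = 0\<^sub>v d"
      using det_0_iff_vec_prod_zero_field[OF Ac] by auto
    have "\<forall>i. (\<Sum>k\<in>{1..d}. c $ (k - 1) * (v k i - v 0 i)) = 0"
    proof
      fix i show "(\<Sum>k\<in>{1..d}. c $ (k - 1) * (v k i - v 0 i)) = 0"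
      proof (cases "i < d")
        case True
        thus ?thesis using Av[OF True c(1)] c(3) by simp
      next
        case False thus ?thesis using vz by (auto intro!: sum.neutral)
      qed
    qed
    hence "\<forall>k\<in>{1..d}. c $ (k - 1) = 0"
      using aff[unfolded aff_indep_def, THEN spec[of _ "\<lambda>k. c $ (k - 1)"]] by (rule mp[rotated])
    hence "c = 0\<^sub>v d" using c(1)
    proof (intro eq_vecI)
      fix i assume "i < dim_vec (0\<^sub>v d :: real vec)"
      hence "Suc i \<in> {1..d}" by simp
      with \<open>\<forall>k\<in>{1..d}. c $ (k - 1) = 0\<close> have "c $ (Suc i - 1) = 0" by blast
      thus "c $ i = 0\<^sub>v d $ i" using \<open>i < dim_vec (0\<^sub>v d :: real vec)\<close> by simp
    qed (use c(1) in simp)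
    with c(2) show False by simp
  qed
  hence "A \<in> Units (ring_mat TYPE(real) d ())" by (rule det_non_zero_imp_unit[OF Ac])
  then obtain B where B: "B \<in> carrier_mat d d" "A * B = 1\<^sub>m d"
    unfolding Units_def ring_mat_def by auto
  define y where "y = vec d (\<lambda>i. x i - v 0 i)"
  define cv where "cv = B *\<^sub>v y"
  have cvc: "cv \<in> carrier_vec d" unfolding cv_def y_def using B by simp
  have "A *\<^sub>v cv = y" unfolding cv_def
    using assoc_mult_mat_vec[OF Ac B(1), of y, symmetric] B(2) y_def by simp
  show ?thesis
  proof (intro exI allI)
    fix i show "x i - v 0 i = (\<Sum>k\<in>{1..d}. cv $ (k - 1) * (v k i - v 0 i))"
    proof (cases "i < d")
      case True
      thus ?thesis using Av[OF True cvc] \<open>A *\<^sub>v cv = y\<close> y_def by simp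
    next
      case False thus ?thesis using vz x unfolding Rd_def by (auto intro!: sum.neutral)
    qed
  qed
qed


lemma split_d: fixes d :: nat shows "d \<ge> 1 \<Longrightarrow> (\<Sum>k\<le>d. f k) = (\<Sum>k<d-1. f k) + f (d-1) + (f d :: real)"
proof -
  assume "d \<ge> 1"
  then obtain e where e: "d = Suc e" by (cases d) auto
  show ?thesis unfolding e by (simp add: lessThan_Suc_atMost[symmetric] add.commute add.left_commute)
qed

locale core =
  fixes d :: nat and w :: "nat \<Rightarrow> pt" and z :: pt and n :: nat
  assumes d2: "d \<ge> 2" and d_eq: "d = Suc n"
  and wZ: "\<And>k. k \<le> d \<Longrightarrow> w k \<in> Zd d"
  and uniq: "\<And>a b k. (\<Sum>k\<le>d. a k) = (\<Sum>k\<le>d. b k) \<Longrightarrow>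
        (\<And>i. (\<Sum>k\<le>d. a k * w k i) = (\<Sum>k\<le>d. b k * w k i)) \<Longrightarrow> k \<le> d \<Longrightarrow> a k = b k"
  and surj: "\<And>x. x \<in> Rd d \<Longrightarrow> \<exists>\<mu>. (\<Sum>k\<le>d. \<mu> k) = 1 \<and> (\<forall>i. x i = (\<Sum>k\<le>d. \<mu> k * w k i))"
  and intz: "interior_d d (conv (w ` {..d})) \<inter> Zd d = {z}"
  and zb: "\<And>i. z i = (\<Sum>k\<le>d. target_bary d k * w k i)"
  and zsum: "(\<Sum>k\<le>d. target_bary d k) = 1"
begin

lemma wR: "k \<le> d \<Longrightarrow> w k \<in> Rd d" using wZ unfolding Zd_def by auto
lemma wzero: "k \<le> d \<Longrightarrow> i \<ge> d \<Longrightarrow> w k i = 0" using wR unfolding Rd_def by auto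

definition c0 :: "nat \<Rightarrow> real" where
  "c0 = (SOME \<mu>. (\<Sum>k\<le>d. \<mu> k) = 1 \<and> (\<forall>i. (0::real) = (\<Sum>k\<le>d. \<mu> k * w k i)))"
definition ce :: "nat \<Rightarrow> nat \<Rightarrow> real" where
  "ce j = (SOME \<mu>. (\<Sum>k\<le>d. \<mu> k) = 1 \<and> (\<forall>i. (if i = j then 1 else 0) = (\<Sum>k\<le>d. \<mu> k * w k i)))"
definition bc :: "pt \<Rightarrow> nat \<Rightarrow> real" where
  "bc x k = c0 k + (\<Sum>i<d. x i * (ce i k - c0 k))"

lemma c0: "(\<Sum>k\<le>d. c0 k) = 1 \<and> (\<forall>i. (0::real) = (\<Sum>k\<le>d. c0 k * w k i))"
proof -
  have "(\<lambda>_. 0::real) \<in> Rd d" unfolding Rd_def by simp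
  from surj[OF this] show ?thesis unfolding c0_def by (rule someI_ex)
qed

lemma ce: "j < d \<Longrightarrow> (\<Sum>k\<le>d. ce j k) = 1 \<and> (\<forall>i. (if i = j then 1 else 0) = (\<Sum>k\<le>d. ce j k * w k i))"
proof -
  assume j: "j < d"
  have "(\<lambda>i. if i = j then 1 else 0::real) \<in> Rd d" using j unfolding Rd_def by simp
  from surj[OF this] show ?thesis unfolding ce_def by (rule someI_ex)
qed

lemma bc_sum: "(\<Sum>k\<le>d. bc x k) = 1"
proof -
  have sw: "(\<Sum>k\<le>d. \<Sum>i<d. x i * (ce i k - c0 k)) = (\<Sum>i<d. \<Sum>k\<le>d. x i * (ce i k - c0 k))"
    by (rule sum.swap)
  have "(\<Sum>k\<le>d. bc x k) = (\<Sum>k\<le>d. c0 k) + (\<Sum>i<d. x i * ((\<Sum>k\<le>d. ce i k) - (\<Sum>k\<le>d. c0 k)))"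
    unfolding bc_def sum.distrib sw unfolding sum_distrib_left[symmetric] sum_subtractf ..
  also have "\<dots> = 1" using c0 ce by simp
  finally show ?thesis .
qed

lemma bc_rep: "x \<in> Rd d \<Longrightarrow> x j = (\<Sum>k\<le>d. bc x k * w k j)"
proof -
  assume x: "x \<in> Rd d"
  have sw: "(\<Sum>k\<le>d. (\<Sum>i<d. x i * (ce i k - c0 k)) * w k j) = (\<Sum>i<d. \<Sum>k\<le>d. x i * ((ce i k - c0 k) * w k j))"
    by (subst sum.swap) (simp add: sum_distrib_right mult.assoc)
  have "(\<Sum>k\<le>d. bc x k * w k j) = (\<Sum>k\<le>d. c0 k * w k j) + (\<Sum>i<d. x i * ((\<Sum>k\<le>d. ce i k * w k j) - (\<Sum>k\<le>d. c0 k * w k j)))"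
    unfolding bc_def distrib_right sum.distrib sw by (simp add: sum_distrib_left sum_subtractf algebra_simps)
  also have "\<dots> = (\<Sum>i<d. x i * (if j = i then 1 else 0))"
  proof -
    have hce: "(\<Sum>k\<le>d. ce i k * w k j) = (if j = i then 1 else 0)" if "i < d" for i
      using ce[OF that] by metis
    have z0: "(\<Sum>k\<le>d. c0 k * w k j) = 0" using c0 by metis
    show ?thesis unfolding z0 by (simp add: hce)
  qed
  also have "\<dots> = (\<Sum>i<d. if j = i then x j else 0)" by (intro sum.cong) auto
  also have "\<dots> = x j" using x unfolding Rd_def by (cases "j < d") (auto simp: sum.delta)
  finally show ?thesis by simp
qed

lemma bc_unique:
  assumes "(\<Sum>k\<le>d. \<mu> k) = 1" "\<And>j. x j = (\<Sum>k\<le>d. \<mu> k * w k j)" "k \<le> d"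
  shows "bc x k = \<mu> k"
proof -
  have xR: "x \<in> Rd d" unfolding Rd_def using assms(2) wzero by auto
  show ?thesis
  proof (rule uniq[OF _ _ assms(3)])
    show "sum (bc x) {..d} = sum \<mu> {..d}" using bc_sum assms(1) by simp
    fix i show "(\<Sum>k\<le>d. bc x k * w k i) = (\<Sum>k\<le>d. \<mu> k * w k i)"
      using bc_rep[OF xR, of i] assms(2)[of i] by simp
  qed
qed

lemma bc_comb: "bc (\<lambda>j. p j + c * (r j - s j)) k = bc p k + c * (bc r k - bc s k)"
  unfolding bc_def by (simp add: algebra_simps sum.distrib sum_subtractf sum_distrib_left)

end
context core begin

lemma n1: "n \<ge> 1" using d2 d_eq by simp
lemma n_def: "n = d - 1" using d_eq by simp
lemma split_n: "(\<Sum>k\<le>d. f k) = (\<Sum>k<n. f k) + f n + (f (Suc n) :: real)"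
  unfolding d_eq by (simp add: lessThan_Suc_atMost[symmetric] add.commute add.left_commute)

definition q :: "nat \<Rightarrow> real" where "q i = real (sylvester (Suc i))"
definition Qr :: real where "Qr = (\<Prod>j\<in>{1..<d}. real (sylvester j))"
definition m :: pt where "m j = (w n j + w (Suc n) j) / 2"
definition E :: "nat \<Rightarrow> pt" where "E i j = (w i j - m j) / q i"
definition H :: pt where "H j = w n j - m j"
definition rho :: "pt \<Rightarrow> nat \<Rightarrow> real" where "rho x i = q i * bc x i"
definition tau :: "pt \<Rightarrow> real" where "tau x = bc x n - bc x (Suc n)"
definition Pt :: "(nat \<Rightarrow> real) \<Rightarrow> real \<Rightarrow> pt" where
  "Pt \<rho> t j = m j + (\<Sum>i<n. \<rho> i * E i j) + t * H j"
definition nu :: "(nat \<Rightarrow> real) \<Rightarrow> real \<Rightarrow> nat \<Rightarrow> real" where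
  "nu \<rho> t k = (if k < n then \<rho> k / q k
     else if k = n then (1 - (\<Sum>i<n. \<rho> i / q i) + t) / 2
     else (1 - (\<Sum>i<n. \<rho> i / q i) - t) / 2)"

lemma q_ge2: "q i \<ge> 2" unfolding q_def using syl_ge2[of "Suc i"] by simp
lemma q_pos: "q i > 0" using q_ge2[of i] by simp
lemma q_nz: "q i \<noteq> 0" using q_pos[of i] by simp
lemma Qr_ge1: "Qr \<ge> 1"
  unfolding Qr_def by (rule prod_ge_1) (use syl_ge2 in \<open>auto intro: order_trans[OF _ syl_ge2]\<close>)
lemma Qr_pos: "Qr > 0" using Qr_ge1 by simp

lemma tb_small: "k < n \<Longrightarrow> target_bary d k = 1 / q k"
  unfolding target_bary_def q_def n_def by simp
lemma tb_big: "\<not> k < n \<Longrightarrow> target_bary d k = 1 / (2 * Qr)"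
proof -
  assume "\<not> k < n"
  moreover have "real (sylvester d) - 1 = Qr" unfolding Qr_def using syl_eq[of d] d2 by simp
  ultimately show ?thesis unfolding target_bary_def n_def by simp
qed

lemma nu_n: "nu \<rho> t n = (1 - (\<Sum>i<n. \<rho> i / q i) + t) / 2" unfolding nu_def by auto
lemma nu_Sn: "nu \<rho> t (Suc n) = (1 - (\<Sum>i<n. \<rho> i / q i) - t) / 2" unfolding nu_def by auto

lemma nu_sum: "(\<Sum>k\<le>d. nu \<rho> t k) = 1"
proof -
  have "(\<Sum>k\<le>d. nu \<rho> t k) = (\<Sum>k<n. nu \<rho> t k) + nu \<rho> t n + nu \<rho> t (Suc n)" by (rule split_n)
  also have "(\<Sum>k<n. nu \<rho> t k) = (\<Sum>i<n. \<rho> i / q i)" unfolding nu_def by (intro sum.cong) auto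
  moreover have "\<And>S t::real. S + (1-S+t)/2 + (1-S-t)/2 = 1" by (simp add: field_simps)
  ultimately show ?thesis unfolding nu_n nu_Sn by metis
qed

lemma Pt_nu: "Pt \<rho> t j = (\<Sum>k\<le>d. nu \<rho> t k * w k j)"
proof -
  let ?S = "\<Sum>i<n. \<rho> i / q i"
  have "(\<Sum>i<n. \<rho> i * E i j) = (\<Sum>i<n. \<rho> i / q i * w i j - \<rho> i / q i * m j)"
    unfolding E_def by (intro sum.cong) (auto simp: diff_divide_distrib algebra_simps)
  also have "\<dots> = (\<Sum>i<n. \<rho> i / q i * w i j) - ?S * m j"
    by (simp add: sum_subtractf sum_distrib_right)
  finally have A: "(\<Sum>i<n. \<rho> i * E i j) = (\<Sum>i<n. \<rho> i / q i * w i j) - ?S * m j" .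
  have "(\<Sum>k\<le>d. nu \<rho> t k * w k j) = (\<Sum>k<n. nu \<rho> t k * w k j) + nu \<rho> t n * w n j + nu \<rho> t (Suc n) * w (Suc n) j"
    by (rule split_n)
  also have "(\<Sum>k<n. nu \<rho> t k * w k j) = (\<Sum>i<n. \<rho> i / q i * w i j)" unfolding nu_def by (intro sum.cong) auto
  finally have B: "(\<Sum>k\<le>d. nu \<rho> t k * w k j) = (\<Sum>i<n. \<rho> i / q i * w i j) + nu \<rho> t n * w n j + nu \<rho> t (Suc n) * w (Suc n) j" .
  have key: "\<And>X S a b t::real. (a+b)/2 + (X - S*((a+b)/2)) + t*(a - (a+b)/2) = X + (1 - S + t)/2 * a + (1 - S - t)/2 * b"
    by (simp add: field_simps)
  have nn: "nu \<rho> t n = (1 - ?S + t) / 2" "nu \<rho> t (Suc n) = (1 - ?S - t) / 2" unfolding nu_def by auto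
  show ?thesis unfolding Pt_def A B nn unfolding H_def m_def by (rule key)
qed

lemma Pt_R: "Pt \<rho> t \<in> Rd d"
  unfolding Rd_def using Pt_nu wzero by auto

lemma bc_Pt: "k \<le> d \<Longrightarrow> bc (Pt \<rho> t) k = nu \<rho> t k"
  by (rule bc_unique[OF nu_sum Pt_nu])

lemma rho_Pt: "i < n \<Longrightarrow> rho (Pt \<rho> t) i = \<rho> i"
  unfolding rho_def using bc_Pt[of i] q_nz[of i] d_eq by (simp add: nu_def)

lemma tau_Pt: "tau (Pt \<rho> t) = t"
proof -
  have "bc (Pt \<rho> t) n = nu \<rho> t n" "bc (Pt \<rho> t) (Suc n) = nu \<rho> t (Suc n)"
    using bc_Pt d_eq by auto
  thus ?thesis unfolding tau_def nu_n nu_Sn by (simp add: field_simps)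
qed

lemma bc_split: "(\<Sum>k<n. bc x k) + bc x n + bc x (Suc n) = 1"
  using bc_sum[of x] split_n[of "bc x"] by simp

lemma nu_bc: "k \<le> d \<Longrightarrow> nu (rho x) (tau x) k = bc x k"
proof -
  assume k: "k \<le> d"
  have S: "(\<Sum>i<n. rho x i / q i) = (\<Sum>i<n. bc x i)"
    unfolding rho_def using q_nz by (intro sum.cong) auto
  show ?thesis
  proof (cases "k < n")
    case True thus ?thesis unfolding nu_def rho_def using q_nz[of k] by simp
  next
    case False
    hence "k = n \<or> k = Suc n" using k d_eq by auto
    thus ?thesis
    proof
      assume kn: "k = n"
      have "nu (rho x) (tau x) n = bc x n" unfolding nu_n S tau_def using bc_split[of x] by (simp add: field_simps)
      thus ?thesis using kn by simp
    next
      assume kn: "k = Suc n"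
      have "nu (rho x) (tau x) (Suc n) = bc x (Suc n)" unfolding nu_Sn S tau_def using bc_split[of x] by (simp add: field_simps)
      thus ?thesis using kn by simp
    qed
  qed
qed

lemma Pt_bc: assumes x: "x \<in> Rd d" shows "Pt (rho x) (tau x) = x"
proof
  fix j
  have "(\<Sum>k\<le>d. nu (rho x) (tau x) k * w k j) = (\<Sum>k\<le>d. bc x k * w k j)" using nu_bc by (intro sum.cong) auto
  thus "Pt (rho x) (tau x) j = x j" using Pt_nu bc_rep[OF x] by simp
qed

end

lemma conv_image:
  fixes I :: "nat set" and p :: "nat \<Rightarrow> pt"
  assumes I: "finite I" "I \<noteq> {}"
  shows "conv (p ` I) = {x. \<exists>\<mu>. (\<forall>k\<in>I. 0 \<le> \<mu> k) \<and> sum \<mu> I = 1 \<and> x = (\<lambda>j. \<Sum>k\<in>I. \<mu> k * p k j)}"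
proof
  show "conv (p ` I) \<subseteq> {x. \<exists>\<mu>. (\<forall>k\<in>I. 0 \<le> \<mu> k) \<and> sum \<mu> I = 1 \<and> x = (\<lambda>j. \<Sum>k\<in>I. \<mu> k * p k j)}"
  proof
    fix x assume "x \<in> conv (p ` I)"
    then obtain F c where F: "finite F" "F \<subseteq> p ` I" "F \<noteq> {}" "\<forall>v\<in>F. 0 \<le> c v" "sum c F = 1"
      and x: "x = (\<lambda>i. \<Sum>v\<in>F. c v * v i)" unfolding conv_def by blast
    define g where "g v = (SOME k. k \<in> I \<and> p k = v)" for v
    have g: "g v \<in> I \<and> p (g v) = v" if "v \<in> F" for v
      unfolding g_def by (rule someI_ex) (use F(2) that in auto)
    have ginj: "inj_on g F" by (rule inj_onI) (metis g)
    have gI: "g ` F \<subseteq> I" using g by auto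
    define \<mu> where "\<mu> k = (if k \<in> g ` F then c (p k) else 0)" for k
    have sumI: "(\<Sum>k\<in>I. \<mu> k * f k) = (\<Sum>v\<in>F. c v * f (g v))" for f :: "nat \<Rightarrow> real"
    proof -
      have "(\<Sum>k\<in>I. \<mu> k * f k) = (\<Sum>k\<in>g ` F. c (p k) * f k)"
        unfolding \<mu>_def by (rule sum.mono_neutral_cong_right) (use I gI in auto)
      also have "\<dots> = (\<Sum>v\<in>F. c (p (g v)) * f (g v))" by (rule sum.reindex[OF ginj, unfolded comp_def])
      also have "\<dots> = (\<Sum>v\<in>F. c v * f (g v))" using g by (intro sum.cong) auto
      finally show ?thesis .
    qed
    have "sum \<mu> I = 1" using sumI[of "\<lambda>_. 1"] F(5) by simp
    moreover have "\<forall>k\<in>I. 0 \<le> \<mu> k" unfolding \<mu>_def using F(4) g by auto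
    moreover have "x = (\<lambda>j. \<Sum>k\<in>I. \<mu> k * p k j)"
    proof
      fix j show "x j = (\<Sum>k\<in>I. \<mu> k * p k j)" unfolding sumI[of "\<lambda>k. p k j"] x using g by (auto intro: sum.cong)
    qed
    ultimately show "x \<in> {x. \<exists>\<mu>. (\<forall>k\<in>I. 0 \<le> \<mu> k) \<and> sum \<mu> I = 1 \<and> x = (\<lambda>j. \<Sum>k\<in>I. \<mu> k * p k j)}" by blast
  qed
next
  show "{x. \<exists>\<mu>. (\<forall>k\<in>I. 0 \<le> \<mu> k) \<and> sum \<mu> I = 1 \<and> x = (\<lambda>j. \<Sum>k\<in>I. \<mu> k * p k j)} \<subseteq> conv (p ` I)"
  proof
    fix x assume "x \<in> {x. \<exists>\<mu>. (\<forall>k\<in>I. 0 \<le> \<mu> k) \<and> sum \<mu> I = 1 \<and> x = (\<lambda>j. \<Sum>k\<in>I. \<mu> k * p k j)}"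
    then obtain \<mu> where mu: "\<forall>k\<in>I. 0 \<le> \<mu> k" "sum \<mu> I = 1" and x: "x = (\<lambda>j. \<Sum>k\<in>I. \<mu> k * p k j)" by blast
    define c where "c v = (\<Sum>k\<in>{k\<in>I. p k = v}. \<mu> k)" for v
    have "finite (p ` I)" "p ` I \<subseteq> p ` I" "p ` I \<noteq> {}" using I by auto
    moreover have "\<forall>v\<in>p ` I. 0 \<le> c v" unfolding c_def using mu by (auto intro: sum_nonneg)
    moreover have "sum c (p ` I) = 1" unfolding c_def using sum.image_gen[OF I(1), of \<mu> p] mu by simp
    moreover have "x = (\<lambda>i. \<Sum>v\<in>p ` I. c v * v i)"
    proof
      fix i
      have "(\<Sum>v\<in>p ` I. c v * v i) = (\<Sum>v\<in>p ` I. \<Sum>k\<in>{k\<in>I. p k = v}. \<mu> k * p k i)"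
        unfolding c_def sum_distrib_right by (intro sum.cong) auto
      also have "\<dots> = (\<Sum>k\<in>I. \<mu> k * p k i)" using sum.image_gen[OF I(1), of "\<lambda>k. \<mu> k * p k i" p] by simp
      finally show "x i = (\<Sum>v\<in>p ` I. c v * v i)" using x by simp
    qed
    ultimately show "x \<in> conv (p ` I)" unfolding conv_def by blast
  qed
qed

context core begin

lemma conv_w: "conv (w ` {..d}) = {x. \<exists>\<mu>. (\<forall>k\<in>{..d}. 0 \<le> \<mu> k) \<and> sum \<mu> {..d} = 1 \<and> x = (\<lambda>j. \<Sum>k\<in>{..d}. \<mu> k * w k j)}"
  by (rule conv_image) auto

lemma nonneg_conv: assumes "x \<in> Rd d" "\<And>k. k \<le> d \<Longrightarrow> bc x k \<ge> 0" shows "x \<in> conv (w ` {..d})"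
  unfolding conv_w using assms bc_sum bc_rep[OF assms(1)] by (intro CollectI exI[of _ "bc x"]) auto

lemma pos_interior:
  assumes x: "x \<in> Rd d" and pos: "\<And>k. k \<le> d \<Longrightarrow> bc x k > 0"
  shows "x \<in> interior_d d (conv (w ` {..d}))"
proof -
  define \<eta> where "\<eta> = Min (bc x ` {..d})"
  have \<eta>: "\<eta> > 0" unfolding \<eta>_def using pos by (subst Min_gr_iff) auto
  have \<eta>le: "\<eta> \<le> bc x k" if "k \<le> d" for k unfolding \<eta>_def using that by (intro Min_le) auto
  define Cb where "Cb = (\<Sum>k\<le>d. \<Sum>i<d. \<bar>ce i k - c0 k\<bar>)"
  have Cb: "(\<Sum>i<d. \<bar>ce i k - c0 k\<bar>) \<le> Cb" if "k \<le> d" for k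
    unfolding Cb_def using that by (intro member_le_sum) (auto intro: sum_nonneg)
  have Cb0: "Cb \<ge> 0" unfolding Cb_def by (auto intro: sum_nonneg)
  define e where "e = \<eta> / (Cb + 1)"
  have e: "e > 0" unfolding e_def using \<eta> Cb0 by simp
  have eCb: "e * Cb < \<eta>" unfolding e_def using \<eta> Cb0 by (simp add: field_simps)
  have "\<forall>y\<in>Rd d. (\<Sum>i<d. (y i - x i)\<^sup>2) < e\<^sup>2 \<longrightarrow> y \<in> conv (w ` {..d})"
  proof (intro ballI impI)
    fix y assume y: "y \<in> Rd d" and dist: "(\<Sum>i<d. (y i - x i)\<^sup>2) < e\<^sup>2"
    have yi: "\<bar>y i - x i\<bar> < e" if "i < d" for i
    proof -
      have "(y i - x i)\<^sup>2 \<le> (\<Sum>i<d. (y i - x i)\<^sup>2)" using that by (intro member_le_sum) auto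
      hence "\<bar>y i - x i\<bar>\<^sup>2 < e\<^sup>2" using dist by simp
      thus ?thesis using power_less_imp_less_base[of "\<bar>y i - x i\<bar>" 2 e] e by simp
    qed
    show "y \<in> conv (w ` {..d})"
    proof (rule nonneg_conv[OF y])
      fix k assume k: "k \<le> d"
      have dd: "(\<Sum>i<d. (y i - x i) * (ce i k - c0 k)) = (\<Sum>i<d. y i * (ce i k - c0 k)) - (\<Sum>i<d. x i * (ce i k - c0 k))"
        by (simp add: left_diff_distrib sum_subtractf)
      have "bc y k - bc x k = (\<Sum>i<d. (y i - x i) * (ce i k - c0 k))"
        unfolding bc_def dd by simp
      also have "\<dots> \<ge> - (\<Sum>i<d. e * \<bar>ce i k - c0 k\<bar>)"
      proof -
        have "\<bar>\<Sum>i<d. (y i - x i) * (ce i k - c0 k)\<bar> \<le> (\<Sum>i<d. \<bar>(y i - x i) * (ce i k - c0 k)\<bar>)" by (rule sum_abs)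
        also have "\<dots> \<le> (\<Sum>i<d. e * \<bar>ce i k - c0 k\<bar>)"
        proof (intro sum_mono)
          fix i assume "i \<in> {..<d}"
          hence "\<bar>y i - x i\<bar> \<le> e" using yi by (simp add: less_imp_le)
          thus "\<bar>(y i - x i) * (ce i k - c0 k)\<bar> \<le> e * \<bar>ce i k - c0 k\<bar>"
            unfolding abs_mult by (rule mult_right_mono) simp
        qed
        finally show ?thesis by linarith
      qed
      finally have "bc y k \<ge> bc x k - e * (\<Sum>i<d. \<bar>ce i k - c0 k\<bar>)" by (simp add: sum_distrib_left)
      moreover have "e * (\<Sum>i<d. \<bar>ce i k - c0 k\<bar>) \<le> e * Cb" using Cb[OF k] e by simp
      ultimately show "bc y k \<ge> 0" using eCb \<eta>le[OF k] by linarith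
    qed
  qed
  thus ?thesis unfolding interior_d_def using x e by blast
qed

end
context core begin

definition K :: "nat \<Rightarrow> real" where "K i = real (Kc d (Suc i))"

lemma Suc_in: "i < n \<Longrightarrow> Suc i \<in> {1..<d}" using d_eq by auto

lemma Qr_K: "i < n \<Longrightarrow> Qr = q i * K i"
proof -
  assume i: "i < n"
  have "Qr = real (\<Prod>j\<in>{1..<d}. sylvester j)" unfolding Qr_def by simp
  also have "\<dots> = real (sylvester (Suc i) * Kc d (Suc i))" using syl_P_split[OF Suc_in[OF i]] by simp
  finally show ?thesis unfolding q_def K_def by simp
qed

lemma K_Int: "K i \<in> \<int>" unfolding K_def by simp
lemma Qr_Int: "Qr \<in> \<int>" unfolding Qr_def by auto

lemma K1: "i < n \<Longrightarrow> (1 + K i) / q i \<in> \<int>"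
proof -
  assume i: "i < n"
  obtain l where l: "Kc d (Suc i) + 1 = sylvester (Suc i) * l" using syl_Kc_mod[OF Suc_in[OF i]] by blast
  have "1 + K i = q i * real l" unfolding K_def q_def using arg_cong[OF l, of real] by simp
  thus ?thesis using q_nz[of i] by simp
qed

lemma K2: "i < n \<Longrightarrow> l < n \<Longrightarrow> i \<noteq> l \<Longrightarrow> K l / q i \<in> \<int>"
proof -
  assume "i < n" "l < n" "i \<noteq> l"
  then obtain r where r: "Kc d (Suc l) = sylvester (Suc i) * r"
    using syl_dvd_Kc[OF Suc_in Suc_in, of l i] by auto
  have "K l = q i * real r" unfolding K_def q_def using arg_cong[OF r, of real] by simp
  thus ?thesis using q_nz[of i] by simp
qed

lemma z_Zd: "z \<in> Zd d" using intz by auto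

lemma Zd_iff: "x \<in> Zd d \<longleftrightarrow> x \<in> Rd d \<and> (\<forall>i<d. x i \<in> \<int>)" unfolding Zd_def by auto

lemma wInt: "k \<le> d \<Longrightarrow> i < d \<Longrightarrow> w k i \<in> \<int>" using wZ unfolding Zd_def by auto
lemma zInt: "i < d \<Longrightarrow> z i \<in> \<int>" using z_Zd unfolding Zd_def by auto

lemma bc_z: "k \<le> d \<Longrightarrow> bc z k = target_bary d k"
  by (rule bc_unique[OF zsum zb])

lemma zexp: "z j = (\<Sum>i<n. w i j / q i) + m j / Qr"
proof -
  have e1: "z j = (\<Sum>k<n. target_bary d k * w k j) + target_bary d n * w n j + target_bary d (Suc n) * w (Suc n) j"
    using zb[of j] split_n by simp
  have e2: "(\<Sum>k<n. target_bary d k * w k j) = (\<Sum>i<n. w i j / q i)" using tb_small by (intro sum.cong) auto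
  have e3: "target_bary d n * w n j + target_bary d (Suc n) * w (Suc n) j = m j / Qr"
    using tb_big[of n] tb_big[of "Suc n"] unfolding m_def by (simp add: add_divide_distrib)
  show ?thesis using e1 e2 e3 by linarith
qed

lemma m_formula: "m j = Qr * z j - (\<Sum>i<n. K i * w i j)"
proof -
  have "Qr * z j = (\<Sum>i<n. Qr * (w i j / q i)) + m j" unfolding zexp using Qr_pos
    by (simp add: sum_distrib_left distrib_left)
  also have "(\<Sum>i<n. Qr * (w i j / q i)) = (\<Sum>i<n. K i * w i j)"
    using Qr_K q_nz by (intro sum.cong) auto
  finally show ?thesis by simp
qed

lemma m_Zd: "m \<in> Zd d"
  unfolding Zd_iff
proof
  show "m \<in> Rd d" unfolding Rd_def m_def using wzero d_eq by auto
  show "\<forall>i<d. m i \<in> \<int>" unfolding m_formula using Qr_Int zInt K_Int wInt d_eq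
    by (auto intro!: Ints_diff Ints_mult Ints_sum)
qed

lemma E_formula: "i < n \<Longrightarrow> E i j = (1 + K i) / q i * w i j + (\<Sum>l\<in>{..<n}-{i}. K l / q i * w l j) - K i * z j"
proof -
  assume i: "i < n"
  have sp: "(\<Sum>l<n. K l * w l j) = K i * w i j + (\<Sum>l\<in>{..<n}-{i}. K l * w l j)"
    using i by (simp add: sum.remove)
  have "E i j = (w i j - m j) / q i" unfolding E_def ..
  also have "\<dots> = ((1 + K i) * w i j + (\<Sum>l\<in>{..<n}-{i}. K l * w l j) - q i * K i * z j) / q i"
    unfolding m_formula sp Qr_K[OF i] by (simp add: algebra_simps)
  also have "\<dots> = (1 + K i) / q i * w i j + (\<Sum>l\<in>{..<n}-{i}. K l * w l j) / q i - K i * z j"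
    using q_nz[of i] by (simp add: field_simps)
  also have "(\<Sum>l\<in>{..<n}-{i}. K l * w l j) / q i = (\<Sum>l\<in>{..<n}-{i}. K l / q i * w l j)"
    by (simp add: sum_divide_distrib)
  finally show ?thesis .
qed

lemma E_Zd: "i < n \<Longrightarrow> E i \<in> Zd d"
  unfolding Zd_iff
proof
  assume i: "i < n"
  show "E i \<in> Rd d" using m_Zd i unfolding Rd_def Zd_def E_def using wzero d_eq by auto
  show "\<forall>j<d. E i j \<in> \<int>"
  proof (intro allI impI)
    fix j assume j: "j < d"
    have "(\<Sum>l\<in>{..<n}-{i}. K l / q i * w l j) \<in> \<int>"
      using K2[OF i] wInt[of _ j] j d_eq by (intro Ints_sum Ints_mult) auto
    thus "E i j \<in> \<int>" unfolding E_formula[OF i] using K1[OF i] wInt[of i j] zInt[OF j] K_Int i j d_eq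
      by (intro Ints_diff Ints_add Ints_mult) auto
  qed
qed

lemma H_Zd: "H \<in> Zd d"
  using m_Zd wZ[of n] d_eq unfolding Zd_def Rd_def H_def by (auto intro: Ints_diff)

lemma Pt_shift: "Pt \<rho>' t' j = Pt \<rho> t j + (\<Sum>i<n. (\<rho>' i - \<rho> i) * E i j) + (t' - t) * H j"
  unfolding Pt_def by (simp add: algebra_simps sum_subtractf)

lemma shift_Zd:
  assumes x: "x \<in> Zd d" and r: "\<And>i. i < n \<Longrightarrow> \<rho>' i - rho x i \<in> \<int>" and t: "t' - tau x \<in> \<int>"
  shows "Pt \<rho>' t' \<in> Zd d"
  unfolding Zd_iff
proof
  have xR: "x \<in> Rd d" using x unfolding Zd_def by auto
  show "Pt \<rho>' t' \<in> Rd d" by (rule Pt_R)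
  show "\<forall>j<d. Pt \<rho>' t' j \<in> \<int>"
  proof (intro allI impI)
    fix j assume j: "j < d"
    have "Pt \<rho>' t' j = x j + (\<Sum>i<n. (\<rho>' i - rho x i) * E i j) + (t' - tau x) * H j"
      using Pt_shift[of \<rho>' t' j "rho x" "tau x"] Pt_bc[OF xR] by simp
    also have "\<dots> \<in> \<int>" using x j r t E_Zd H_Zd unfolding Zd_def
      by (intro Ints_add Ints_sum Ints_mult) auto
    finally show "Pt \<rho>' t' j \<in> \<int>" .
  qed
qed

lemma m_Pt: "m = Pt (\<lambda>_. 0) 0" unfolding Pt_def by simp
lemma bc_m: "k \<le> d \<Longrightarrow> bc m k = nu (\<lambda>_. 0) 0 k" unfolding m_Pt by (rule bc_Pt)
lemma rho_m: "i < n \<Longrightarrow> rho m i = 0" unfolding m_Pt by (simp add: rho_Pt)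
lemma tau_m: "tau m = 0" unfolding m_Pt by (simp add: tau_Pt)

lemma bc_x_small: "x \<in> Rd d \<Longrightarrow> k < n \<Longrightarrow> bc x k = rho x k / q k"
  unfolding rho_def using q_nz by simp

lemma U:
  assumes x: "x \<in> Zd d" and r: "\<And>i. i < n \<Longrightarrow> 0 \<le> rho x i \<and> rho x i < 1"
    and t0: "0 \<le> tau x" and t1: "tau x < 1 / Qr"
  shows "x = m"
proof -
  have xR: "x \<in> Rd d" using x unfolding Zd_def by auto
  define u where "u = (\<lambda>j. z j + 1 * (m j - x j))"
  have bcu: "bc u k = bc z k + (bc m k - bc x k)" for k unfolding u_def bc_comb by simp
  have uZ: "u \<in> Zd d" unfolding u_def using z_Zd m_Zd x unfolding Zd_def Rd_def
    by (auto intro: Ints_add Ints_diff)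
  hence uR: "u \<in> Rd d" unfolding Zd_def by auto
  define S where "S = (\<Sum>i<n. rho x i / q i)"
  have S0: "S \<ge> 0" unfolding S_def by (intro sum_nonneg) (use r q_pos in \<open>auto intro: divide_nonneg_pos\<close>)
  have bxn: "2 * bc x n = 1 - S + tau x" "2 * bc x (Suc n) = 1 - S - tau x"
    using nu_bc[of n x] nu_bc[of "Suc n" x] d_eq unfolding nu_n nu_Sn S_def by auto
  have "bc u k > 0" if k: "k \<le> d" for k
  proof -
    consider "k < n" | "k = n" | "k = Suc n" using k d_eq by linarith
    thus ?thesis
    proof cases
      case 1
      hence "bc u k = 1 / q k + (0 - rho x k / q k)"
        unfolding bcu using bc_z[of k] bc_m[of k] tb_small[of k] bc_x_small[OF xR, of k] k
        by (simp add: nu_def)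
      also have "\<dots> = (1 - rho x k) / q k" by (simp add: diff_divide_distrib)
      finally show ?thesis using r[OF 1] q_pos[of k] by simp
    next
      case 2
      have "bc u k = bc z n + (bc m n - bc x n)" using 2 bcu by simp
      moreover have "bc z n = 1 / (2 * Qr)" using bc_z[of n] tb_big[of n] d_eq by simp
      moreover have "bc m n = 1 / 2" using bc_m[of n] d_eq by (simp add: nu_n)
      moreover have "1 / (2 * Qr) > tau x / 2" using t1 Qr_pos by (simp add: field_simps)
      ultimately have "bc u k = bc z n + (bc m n - bc x n)" "bc m n = 1 / 2" "2 * bc z n > tau x" by auto
      thus ?thesis using S0 bxn by linarith
    next
      case 3
      have "bc u k = bc z (Suc n) + (bc m (Suc n) - bc x (Suc n))" using 3 bcu by simp
      moreover have "bc z (Suc n) = 1 / (2 * Qr)" using bc_z[of "Suc n"] tb_big[of "Suc n"] d_eq by simp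
      moreover have "bc m (Suc n) = 1 / 2" using bc_m[of "Suc n"] d_eq by (simp add: nu_Sn)
      moreover have "1 / (2 * Qr) > 0" using Qr_pos by simp
      ultimately have "bc u k = bc z (Suc n) + (bc m (Suc n) - bc x (Suc n))" "bc m (Suc n) = 1 / 2" "bc z (Suc n) > 0" by auto
      thus ?thesis using S0 t0 bxn by linarith
    qed
  qed
  hence "u \<in> interior_d d (conv (w ` {..d}))" using pos_interior[OF uR] by blast
  hence "u = z" using intz uZ by blast
  show "x = m"
  proof
    fix j from \<open>u = z\<close> have "u j = z j" by simp
    thus "x j = m j" unfolding u_def by simp
  qed
qed

lemma frac_shift: "frac a - a \<in> \<int>" unfolding frac_def by simp

lemma prim: assumes x: "x \<in> Zd d" and t: "tau x = 0" shows "\<And>i. i < n \<Longrightarrow> rho x i \<in> \<int>"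
proof -
  define x' where "x' = Pt (\<lambda>i. frac (rho x i)) 0"
  have x'Z: "x' \<in> Zd d" unfolding x'_def by (rule shift_Zd[OF x]) (use frac_shift t in auto)
  have "x' = m" by (rule U[OF x'Z]) (auto simp: x'_def rho_Pt tau_Pt frac_lt_1 Qr_pos)
  fix i assume i: "i < n"
  have "frac (rho x i) = rho x' i" unfolding x'_def using rho_Pt[OF i] by simp
  also have "\<dots> = 0" using \<open>x' = m\<close> rho_m[OF i] by simp
  finally show "rho x i \<in> \<int>" by (simp add: frac_eq_0_iff)
qed

lemma gap: assumes x: "x \<in> Zd d" and t: "0 < tau x" "tau x < 1 / Qr" shows False
proof -
  define x' where "x' = Pt (\<lambda>i. frac (rho x i)) (tau x)"
  have x'Z: "x' \<in> Zd d" unfolding x'_def by (rule shift_Zd[OF x]) (use frac_shift in auto)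
  have "x' = m" by (rule U[OF x'Z]) (use t in \<open>auto simp: x'_def rho_Pt tau_Pt frac_lt_1\<close>)
  hence "tau x' = 0" using tau_m by simp
  thus False using t unfolding x'_def tau_Pt by simp
qed

end
lemma cyclic_gap:
  fixes G :: "real set" and \<delta> :: real
  assumes one: "1 \<in> G" and sub: "\<And>a b. a \<in> G \<Longrightarrow> b \<in> G \<Longrightarrow> a - b \<in> G"
    and gap: "\<And>g. g \<in> G \<Longrightarrow> 0 < g \<Longrightarrow> \<delta> \<le> g" and \<delta>: "\<delta> > 0"
  shows "\<exists>h::nat. h > 0 \<and> 1 / real h \<in> G \<and> (\<forall>g\<in>G. \<exists>k::int. g = of_int k / real h)"
proof -
  have zero: "0 \<in> G" using sub[OF one one] by simp
  have neg: "- a \<in> G" if "a \<in> G" for a using sub[OF zero that] by simp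
  have add: "a + b \<in> G" if "a \<in> G" "b \<in> G" for a b using sub[OF that(1) neg[OF that(2)]] by simp
  define P where "P = {g\<in>G. 0 < g}"
  have P1: "1 \<in> P" unfolding P_def using one by simp
  have Pbdd: "bdd_below P" unfolding P_def by (rule bdd_belowI[of _ 0]) auto
  define t where "t = Inf P"
  have tlow: "t \<le> g" if "g \<in> P" for g unfolding t_def by (rule cInf_lower[OF that Pbdd])
  have tge: "t \<ge> \<delta>" unfolding t_def by (rule cInf_greatest) (use P1 gap P_def in auto)
  have tP: "t \<in> P"
  proof (rule ccontr)
    assume nt: "t \<notin> P"
    have "t < t + \<delta>" using \<delta> by simp
    then obtain a where a: "a \<in> P" "a < t + \<delta>" using cInf_less_iff[of P "t + \<delta>"] P1 Pbdd unfolding t_def by auto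
    have "a \<noteq> t" using a nt by auto
    hence at: "t < a" using tlow[OF a(1)] by simp
    then obtain b where b: "b \<in> P" "b < a" using cInf_less_iff[of P a] P1 Pbdd unfolding t_def by auto
    have "b \<noteq> t" using b nt by auto
    hence bt: "t < b" using tlow[OF b(1)] by simp
    have "a - b \<in> G" using a b sub unfolding P_def by auto
    moreover have "0 < a - b" "a - b < \<delta>" using a b bt by auto
    ultimately show False using gap by fastforce
  qed
  have tG: "t \<in> G" and tpos: "t > 0" using tP unfolding P_def by auto
  have natmul: "real k * t \<in> G" for k :: nat
  proof (induction k)
    case 0 thus ?case using zero by simp
  next
    case (Suc k) thus ?case using add[OF tG Suc.IH] by (simp add: distrib_right add.commute)
  qed
  have intmul: "of_int k * t \<in> G" for k :: int
  proof (cases "k \<ge> 0")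
    case True thus ?thesis using natmul[of "nat k"] by simp
  next
    case False thus ?thesis using neg[OF natmul[of "nat (- k)"]] by simp
  qed
  have mult: "\<exists>k::int. g = of_int k * t" if g: "g \<in> G" for g
  proof -
    define k where "k = \<lfloor>g / t\<rfloor>"
    define r where "r = g - of_int k * t"
    have rG: "r \<in> G" unfolding r_def by (rule sub[OF g intmul])
    have "of_int k \<le> g / t" "g / t < of_int k + 1" unfolding k_def by linarith+
    hence "of_int k * t \<le> g" "g < (of_int k + 1) * t" using tpos by (simp_all add: field_simps)
    hence r0: "0 \<le> r" "r < t" unfolding r_def by (auto simp: algebra_simps)
    have "r = 0"
    proof (rule ccontr)
      assume "r \<noteq> 0"
      hence "r \<in> P" using r0 rG unfolding P_def by auto
      thus False using tlow r0 by fastforce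
    qed
    thus ?thesis unfolding r_def by auto
  qed
  obtain k0 where k0: "1 = of_int k0 * t" using mult[OF one] by blast
  have k0pos: "k0 > 0"
  proof (rule ccontr)
    assume "\<not> k0 > 0"
    hence "real_of_int k0 \<le> 0" by simp
    hence "of_int k0 * t \<le> 0" using tpos by (simp add: mult_nonpos_nonneg)
    thus False using k0 by simp
  qed
  define h where "h = nat k0"
  have ht: "t = 1 / real h" unfolding h_def using k0 k0pos by (simp add: field_simps)
  have "h > 0" unfolding h_def using k0pos by simp
  moreover have "1 / real h \<in> G" using tG ht by simp
  moreover have "\<forall>g\<in>G. \<exists>k::int. g = of_int k / real h"
  proof
    fix g assume "g \<in> G"
    then obtain k where "g = of_int k * t" using mult by blast
    thus "\<exists>k::int. g = of_int k / real h" unfolding ht by auto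
  qed
  ultimately show ?thesis by blast
qed

context core begin

lemma rho_comb: "rho (\<lambda>j. p j + c * (r j - s j)) i = rho p i + c * (rho r i - rho s i)"
  unfolding rho_def bc_comb by (simp add: algebra_simps)
lemma tau_comb: "tau (\<lambda>j. p j + c * (r j - s j)) = tau p + c * (tau r - tau s)"
  unfolding tau_def bc_comb by (simp add: algebra_simps)

lemma Zd_comb: "p \<in> Zd d \<Longrightarrow> r \<in> Zd d \<Longrightarrow> s \<in> Zd d \<Longrightarrow> c \<in> \<int> \<Longrightarrow> (\<lambda>j. p j + c * (r j - s j)) \<in> Zd d"
proof -
  assume a: "p \<in> Zd d" "r \<in> Zd d" "s \<in> Zd d" "c \<in> \<int>"
  show ?thesis unfolding Zd_def Rd_def
  proof (intro CollectI conjI allI impI)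
    fix i assume "i \<ge> d" thus "p i + c * (r i - s i) = 0" using a unfolding Zd_def Rd_def by auto
  next
    fix i assume "i < d" thus "p i + c * (r i - s i) \<in> \<int>" using a unfolding Zd_def Rd_def
      by (intro Ints_add Ints_mult Ints_diff) auto
  qed
qed

lemma wn_Pt: "w n = Pt (\<lambda>_. 0) 1" unfolding Pt_def H_def by simp
lemma wSn_Pt: "w (Suc n) = Pt (\<lambda>_. 0) (-1)"
proof
  fix j show "w (Suc n) j = Pt (\<lambda>_. 0) (-1) j" unfolding Pt_def H_def m_def by (simp add: field_simps)
qed
lemma wi_Pt: "i < n \<Longrightarrow> w i = Pt (\<lambda>l. if l = i then q i else 0) 0"
proof
  fix j assume i: "i < n"
  have "(\<Sum>l<n. (if l = i then q i else 0) * E l j) = (\<Sum>l<n. if l = i then q i * E i j else 0)"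
    by (intro sum.cong) auto
  also have "\<dots> = q i * E i j" using i by (simp add: sum.delta')
  finally have "(\<Sum>l<n. (if l = i then q i else 0) * E l j) = q i * E i j" .
  thus "w i j = Pt (\<lambda>l. if l = i then q i else 0) 0 j" unfolding Pt_def E_def using q_nz[of i] by simp
qed

lemma Tset_props:
  "\<exists>h::nat. h > 0 \<and> (\<exists>xB. xB \<in> Zd d \<and> tau xB = 1 / real h) \<and> (\<forall>x\<in>Zd d. \<exists>k::int. tau x = of_int k / real h)"
proof -
  define G where "G = tau ` Zd d"
  have wnZ: "w n \<in> Zd d" using wZ[of n] d_eq by simp
  have "tau (w n) = 1" using tau_Pt[of "\<lambda>_. 0" 1] unfolding wn_Pt[symmetric] .
  hence "1 = tau (w n)" by simp
  hence one: "1 \<in> G" unfolding G_def by (rule rev_image_eqI[OF wnZ])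
  have sub: "a - b \<in> G" if ab: "a \<in> G" "b \<in> G" for a b
  proof -
    obtain x where x: "x \<in> Zd d" "a = tau x" using ab(1) unfolding G_def by blast
    obtain y where y: "y \<in> Zd d" "b = tau y" using ab(2) unfolding G_def by blast
    note xy = x(1) y(1) x(2) y(2)
    have Z: "(\<lambda>j. x j + 1 * (m j - y j)) \<in> Zd d" by (rule Zd_comb[OF x(1) m_Zd y(1)]) simp
    have "tau (\<lambda>j. x j + 1 * (m j - y j)) = tau x - tau y" using tau_comb[of x 1 m y] tau_m by simp
    hence "a - b = tau (\<lambda>j. x j + 1 * (m j - y j))" using x(2) y(2) by simp
    thus ?thesis unfolding G_def by (rule rev_image_eqI[OF Z])
  qed
  have gp: "1 / Qr \<le> g" if g: "g \<in> G" "0 < g" for g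
  proof -
    obtain x where x: "x \<in> Zd d" "g = tau x" using g(1) unfolding G_def by blast
    show ?thesis
    proof (rule ccontr)
      assume "\<not> 1 / Qr \<le> g"
      hence "tau x < 1 / Qr" "0 < tau x" using x(2) g(2) by linarith+
      thus False using gap[OF x(1)] by blast
    qed
  qed
  have qp: "1 / Qr > 0" using Qr_pos by simp
  obtain h :: nat where h: "h > 0" "1 / real h \<in> G" "\<forall>g\<in>G. \<exists>k::int. g = of_int k / real h"
    using cyclic_gap[of G "1 / Qr", OF one sub gp qp] by blast
  from h(2) obtain xB where xB: "xB \<in> Zd d" "1 / real h = tau xB" unfolding G_def by blast
  have "\<forall>x\<in>Zd d. \<exists>k::int. tau x = of_int k / real h"
  proof
    fix x assume "x \<in> Zd d"
    hence "tau x \<in> G" unfolding G_def by blast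
    thus "\<exists>k::int. tau x = of_int k / real h" using h(3) by blast
  qed
  thus ?thesis using h(1) xB(1) xB(2)[symmetric] by blast
qed

end

context core begin
lemma Pt_cong: "(\<And>i. i < n \<Longrightarrow> \<rho> i = \<rho>' i) \<Longrightarrow> Pt \<rho> t = Pt \<rho>' t"
proof
  fix j assume e: "\<And>i. i < n \<Longrightarrow> \<rho> i = \<rho>' i"
  have "(\<Sum>i<n. \<rho> i * E i j) = (\<Sum>i<n. \<rho>' i * E i j)" by (intro sum.cong) (auto simp: e)
  thus "Pt \<rho> t j = Pt \<rho>' t j" unfolding Pt_def by simp
qed
end

locale core2 = core +
  fixes h :: nat and xB :: pt and c :: "nat \<Rightarrow> int"
  assumes h_pos: "h > 0" and xB_Z: "xB \<in> Zd d" and tau_xB: "tau xB = 1 / real h"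
  and Tint: "\<And>x. x \<in> Zd d \<Longrightarrow> \<exists>k::int. tau x = of_int k / real h"
  and c_eq: "\<And>i. i < n \<Longrightarrow> of_int (c i) = - real h * rho xB i"
begin

definition a :: "nat \<Rightarrow> int" where "a i = c i mod int h"
definition f :: "pt \<Rightarrow> pt" where
  "f x j = (if j < n then rho x j + tau x * of_int (a j) else if j = n then real h * tau x else 0)"
definition pre :: "pt \<Rightarrow> pt" where
  "pre \<alpha> = Pt (\<lambda>i. \<alpha> i - \<alpha> n / real h * of_int (a i)) (\<alpha> n / real h)"

lemma hr: "real h > 0" using h_pos by simp

lemma a_bounds: "0 \<le> a i \<and> a i < int h" unfolding a_def using h_pos by simp

lemma a_div: "(of_int (c i) - of_int (a i)) / real h \<in> \<int>"
proof -
  have "c i - a i = int h * (c i div int h)" unfolding a_def by (simp add: minus_mod_eq_mult_div)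
  hence "real_of_int (c i) - real_of_int (a i) = real h * real_of_int (c i div int h)"
    by (metis of_int_diff of_int_mult of_int_of_nat_eq)
  thus ?thesis using hr by simp
qed

lemma rho_xB: "i < n \<Longrightarrow> rho xB i = - of_int (c i) / real h"
  using c_eq[of i] hr by (simp add: field_simps)

lemma f_R: "f x \<in> Rd d" unfolding Rd_def f_def using d_eq by auto

lemma f_Zd: assumes x: "x \<in> Zd d" shows "f x \<in> Zd d"
proof -
  obtain k :: int where k: "tau x = of_int k / real h" using Tint[OF x] by blast
  define y where "y = (\<lambda>j. x j + (- of_int k) * (xB j - m j))"
  have yZ: "y \<in> Zd d" unfolding y_def by (rule Zd_comb[OF x xB_Z m_Zd]) simp
  have "tau y = 0" unfolding y_def tau_comb tau_m tau_xB k by simp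
  hence ry: "rho y i \<in> \<int>" if "i < n" for i using prim[OF yZ] that by blast
  have "f x i \<in> \<int>" if i: "i < d" for i
  proof (cases "i < n")
    case True
    have ryeq: "rho y i = rho x i + of_int k * of_int (c i) / real h"
      unfolding y_def rho_comb rho_m[OF True] rho_xB[OF True] by simp
    have key: "\<And>R Y K C A H::real. H \<noteq> 0 \<Longrightarrow> Y = R + K*C/H \<Longrightarrow> R + K/H*A = Y - K*((C - A)/H)"
      by (simp add: field_simps)
    have fx: "f x i = rho x i + of_int k / real h * of_int (a i)" unfolding f_def k using True by simp
    have "f x i = rho y i - of_int k * ((of_int (c i) - of_int (a i)) / real h)"
      unfolding fx by (rule key) (use hr ryeq in auto)
    also have "\<dots> \<in> \<int>" using ry[OF True] a_div by (intro Ints_diff Ints_mult) auto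
    finally show ?thesis .
  next
    case False
    hence "i = n" using i d_eq by simp
    thus ?thesis unfolding f_def k using hr by simp
  qed
  thus ?thesis using f_R unfolding Zd_def by auto
qed

lemma f_pre: "\<alpha> \<in> Rd d \<Longrightarrow> f (pre \<alpha>) = \<alpha>"
proof
  fix j assume al: "\<alpha> \<in> Rd d"
  show "f (pre \<alpha>) j = \<alpha> j"
  proof (cases "j < n")
    case True thus ?thesis unfolding f_def pre_def rho_Pt[OF True] tau_Pt by simp
  next
    case False
    show ?thesis
    proof (cases "j = n")
      case True thus ?thesis unfolding f_def pre_def tau_Pt using hr by simp
    next
      case False
      hence "j \<ge> d" using \<open>\<not> j < n\<close> d_eq by simp
      thus ?thesis using al False \<open>\<not> j < n\<close> unfolding f_def Rd_def by simp
    qed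
  qed
qed

lemma pre_R: "pre \<alpha> \<in> Rd d" unfolding pre_def by (rule Pt_R)

lemma pre_Zd: assumes al: "\<alpha> \<in> Zd d" shows "pre \<alpha> \<in> Zd d"
proof -
  have "\<alpha> n \<in> \<int>" using al d_eq unfolding Zd_def by auto
  then obtain kk where kk: "\<alpha> n = of_int kk" by (auto elim: Ints_cases)
  define p where "p = (\<lambda>j. m j + of_int kk * (xB j - m j))"
  have pZ: "p \<in> Zd d" unfolding p_def by (rule Zd_comb[OF m_Zd xB_Z m_Zd]) simp
  have rp: "rho p i = - of_int kk * of_int (c i) / real h" if "i < n" for i
    unfolding p_def rho_comb rho_m[OF that] rho_xB[OF that] by simp
  have tp: "tau p = of_int kk / real h" unfolding p_def tau_comb tau_m tau_xB by simp
  show ?thesis unfolding pre_def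
  proof (rule shift_Zd[OF pZ])
    fix i assume i: "i < n"
    have "\<alpha> i \<in> \<int>" using al i d_eq unfolding Zd_def by auto
    have "\<alpha> i - \<alpha> n / real h * of_int (a i) - rho p i = \<alpha> i + of_int kk * ((of_int (c i) - of_int (a i)) / real h)"
      unfolding rp[OF i] kk using hr by (simp add: field_simps)
    also have "\<dots> \<in> \<int>" using \<open>\<alpha> i \<in> \<int>\<close> a_div by (intro Ints_add Ints_mult) auto
    finally show "\<alpha> i - \<alpha> n / real h * of_int (a i) - rho p i \<in> \<int>" .
  next
    show "\<alpha> n / real h - tau p \<in> \<int>" unfolding tp kk by simp
  qed
qed

lemma f_inj: assumes x: "x \<in> Rd d" and y: "y \<in> Rd d" and e: "f x = f y" shows "x = y"
proof -
  have "f x n = f y n" using e by simp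
  hence t: "tau x = tau y" unfolding f_def using hr by simp
  have r: "rho x i = rho y i" if "i < n" for i
    using fun_cong[OF e, of i] that t unfolding f_def by simp
  have "x = Pt (rho x) (tau x)" using Pt_bc[OF x] by simp
  also have "\<dots> = Pt (rho y) (tau y)" unfolding t by (rule Pt_cong) (rule r)
  also have "\<dots> = y" using Pt_bc[OF y] .
  finally show ?thesis .
qed

lemma f_affine: "\<exists>(A::nat \<Rightarrow> nat \<Rightarrow> real) (b::pt). \<forall>x\<in>Rd d. \<forall>i<d. f x i = (\<Sum>j<d. A i j * x j) + b i"
proof -
  define D where "D j k = ce j k - c0 k" for j k
  have bcD: "bc x k = c0 k + (\<Sum>j<d. x j * D j k)" for x k unfolding bc_def D_def ..
  define A where "A i j = (if i < n then q i * D j i + (D j n - D j (Suc n)) * of_int (a i)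
      else real h * (D j n - D j (Suc n)))" for i j
  define b where "b i = (if i < n then q i * c0 i + (c0 n - c0 (Suc n)) * of_int (a i)
      else real h * (c0 n - c0 (Suc n)))" for i
  have "\<forall>x\<in>Rd d. \<forall>i<d. f x i = (\<Sum>j<d. A i j * x j) + b i"
  proof (intro ballI allI impI)
    fix x i assume i: "i < d"
    show "f x i = (\<Sum>j<d. A i j * x j) + b i"
    proof (cases "i < n")
      case True
      have "(\<Sum>j<d. A i j * x j) = (\<Sum>j<d. q i * (x j * D j i) + of_int (a i) * (x j * D j n) - of_int (a i) * (x j * D j (Suc n)))"
        by (intro sum.cong) (auto simp: A_def True algebra_simps)
      also have "\<dots> = q i * (\<Sum>j<d. x j * D j i) + of_int (a i) * (\<Sum>j<d. x j * D j n) - of_int (a i) * (\<Sum>j<d. x j * D j (Suc n))"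
        by (simp add: sum.distrib sum_subtractf sum_distrib_left)
      finally have sA: "(\<Sum>j<d. A i j * x j) = q i * (\<Sum>j<d. x j * D j i) + of_int (a i) * (\<Sum>j<d. x j * D j n) - of_int (a i) * (\<Sum>j<d. x j * D j (Suc n))" .
      show ?thesis unfolding f_def rho_def tau_def bcD b_def sA using True by (simp add: algebra_simps)
    next
      case False
      hence "i = n" using i d_eq by simp
      have "(\<Sum>j<d. A i j * x j) = (\<Sum>j<d. real h * (x j * D j n) - real h * (x j * D j (Suc n)))"
        by (intro sum.cong) (auto simp: A_def False algebra_simps)
      also have "\<dots> = real h * (\<Sum>j<d. x j * D j n) - real h * (\<Sum>j<d. x j * D j (Suc n))"
        by (simp add: sum_subtractf sum_distrib_left)
      finally have sA: "(\<Sum>j<d. A i j * x j) = real h * (\<Sum>j<d. x j * D j n) - real h * (\<Sum>j<d. x j * D j (Suc n))" .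
      show ?thesis unfolding f_def tau_def bcD b_def sA using False \<open>i = n\<close> by (simp add: algebra_simps)
    qed
  qed
  thus ?thesis by blast
qed


definition ahp :: pt where "ahp = ah_point d a (int h)"
definition u :: "nat \<Rightarrow> pt" where
  "u k = (if k < n then (\<lambda>j. if j = k then q k else 0) else if k = n then ahp
          else if k = Suc n then - ahp else (\<lambda>_. 0))"

lemma ahp_val: "ahp j = (if j < n then of_int (a j) else if j = n then real h else 0)"
  unfolding ahp_def ah_point_def using d_eq by simp

lemma sum_small: "j < n \<Longrightarrow> (\<Sum>k<n. \<mu> k * (if j = k then q k else 0)) = \<mu> j * q j"
proof -
  assume j: "j < n"
  have "(\<Sum>k<n. \<mu> k * (if j = k then q k else 0)) = (\<Sum>k<n. if j = k then \<mu> j * q j else 0)"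
    by (intro sum.cong) auto
  also have "\<dots> = \<mu> j * q j" using j by (simp add: sum.delta)
  finally show ?thesis .
qed

lemma sum_small0: "\<not> j < n \<Longrightarrow> (\<Sum>k<n. \<mu> k * (if j = k then q k else 0)) = 0"
  by (intro sum.neutral) auto

lemma f_comb:
  assumes mu: "(\<Sum>k\<le>d. \<mu> k) = 1"
  shows "f (\<lambda>j. \<Sum>k\<le>d. \<mu> k * w k j) = (\<lambda>j. \<Sum>k\<le>d. \<mu> k * u k j)"
proof
  fix j
  let ?x = "\<lambda>j. \<Sum>k\<le>d. \<mu> k * w k j"
  have bx: "bc ?x k = \<mu> k" if "k \<le> d" for k by (rule bc_unique[OF mu _ that]) simp
  have bn: "bc ?x n = \<mu> n" "bc ?x (Suc n) = \<mu> (Suc n)" using bx d_eq by auto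
  have rhs: "(\<Sum>k\<le>d. \<mu> k * u k j) = (\<Sum>k<n. \<mu> k * (if j = k then q k else 0)) + \<mu> n * ahp j - \<mu> (Suc n) * ahp j"
  proof -
    have "(\<Sum>k\<le>d. \<mu> k * u k j) = (\<Sum>k<n. \<mu> k * u k j) + \<mu> n * u n j + \<mu> (Suc n) * u (Suc n) j" by (rule split_n)
    also have "(\<Sum>k<n. \<mu> k * u k j) = (\<Sum>k<n. \<mu> k * (if j = k then q k else 0))" unfolding u_def by (intro sum.cong) auto
    finally show ?thesis unfolding u_def by simp
  qed
  show "f ?x j = (\<Sum>k\<le>d. \<mu> k * u k j)"
  proof (cases "j < n")
    case True
    have bj: "bc ?x j = \<mu> j" using bx True d_eq by simp
    have aj: "ahp j = of_int (a j)" using ahp_val True by simp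
    show ?thesis unfolding rhs sum_small[OF True] f_def rho_def tau_def bn bj aj using True
      by (simp add: algebra_simps)
  next
    case False
    thus ?thesis unfolding rhs sum_small0[OF False] f_def tau_def bn ahp_val by (simp add: algebra_simps)
  qed
qed

lemma conv_u: "conv (u ` {..d}) = {x. \<exists>\<mu>. (\<forall>k\<in>{..d}. 0 \<le> \<mu> k) \<and> sum \<mu> {..d} = 1 \<and> x = (\<lambda>j. \<Sum>k\<in>{..d}. \<mu> k * u k j)}"
  by (rule conv_image) auto

lemma f_conv: "f ` conv (w ` {..d}) = conv (u ` {..d})"
  unfolding conv_w conv_u
proof (intro equalityI subsetI)
  fix y assume "y \<in> f ` {x. \<exists>\<mu>. (\<forall>k\<in>{..d}. 0 \<le> \<mu> k) \<and> sum \<mu> {..d} = 1 \<and> x = (\<lambda>j. \<Sum>k\<in>{..d}. \<mu> k * w k j)}"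
  then obtain \<mu> where "\<forall>k\<in>{..d}. 0 \<le> \<mu> k" "sum \<mu> {..d} = 1" "y = f (\<lambda>j. \<Sum>k\<in>{..d}. \<mu> k * w k j)" by blast
  thus "y \<in> {x. \<exists>\<mu>. (\<forall>k\<in>{..d}. 0 \<le> \<mu> k) \<and> sum \<mu> {..d} = 1 \<and> x = (\<lambda>j. \<Sum>k\<in>{..d}. \<mu> k * u k j)}"
    using f_comb by auto
next
  fix y assume "y \<in> {x. \<exists>\<mu>. (\<forall>k\<in>{..d}. 0 \<le> \<mu> k) \<and> sum \<mu> {..d} = 1 \<and> x = (\<lambda>j. \<Sum>k\<in>{..d}. \<mu> k * u k j)}"
  then obtain \<mu> where mu: "\<forall>k\<in>{..d}. 0 \<le> \<mu> k" "sum \<mu> {..d} = 1" "y = (\<lambda>j. \<Sum>k\<in>{..d}. \<mu> k * u k j)" by blast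
  hence "y = f (\<lambda>j. \<Sum>k\<in>{..d}. \<mu> k * w k j)" using f_comb by simp
  thus "y \<in> f ` {x. \<exists>\<mu>. (\<forall>k\<in>{..d}. 0 \<le> \<mu> k) \<and> sum \<mu> {..d} = 1 \<and> x = (\<lambda>j. \<Sum>k\<in>{..d}. \<mu> k * w k j)}"
    using mu by blast
qed

lemma u_pair: "u n j + u (Suc n) j = 0" unfolding u_def by simp
lemma u_SSn: "u (Suc d) = (\<lambda>_. 0)" unfolding u_def using d_eq by simp

lemma conv_u2: "conv (u ` {..Suc d}) = conv (u ` {..d})"
proof -
  have c2: "conv (u ` {..Suc d}) = {x. \<exists>\<mu>. (\<forall>k\<in>{..Suc d}. 0 \<le> \<mu> k) \<and> sum \<mu> {..Suc d} = 1 \<and> x = (\<lambda>j. \<Sum>k\<in>{..Suc d}. \<mu> k * u k j)}"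
    by (rule conv_image) auto
  show ?thesis unfolding c2 conv_u
  proof (intro equalityI subsetI)
    fix x assume "x \<in> {x. \<exists>\<mu>. (\<forall>k\<in>{..Suc d}. 0 \<le> \<mu> k) \<and> sum \<mu> {..Suc d} = 1 \<and> x = (\<lambda>j. \<Sum>k\<in>{..Suc d}. \<mu> k * u k j)}"
    then obtain \<mu> where mu: "\<forall>k\<in>{..Suc d}. 0 \<le> \<mu> k" "sum \<mu> {..Suc d} = 1" "x = (\<lambda>j. \<Sum>k\<in>{..Suc d}. \<mu> k * u k j)" by blast
    define \<mu>' where "\<mu>' k = \<mu> k + (if k = n \<or> k = Suc n then \<mu> (Suc d) / 2 else 0)" for k
    have s1: "(\<Sum>k\<le>d. (if k = n \<or> k = Suc n then \<mu> (Suc d) / 2 else 0)) = \<mu> (Suc d)"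
      using split_n[of "\<lambda>k. if k = n \<or> k = Suc n then \<mu> (Suc d) / 2 else 0"] by simp
    have s2: "(\<Sum>k\<le>d. (if k = n \<or> k = Suc n then \<mu> (Suc d) / 2 else 0) * u k j) = 0" for j
    proof -
      have "(\<Sum>k\<le>d. (if k = n \<or> k = Suc n then \<mu> (Suc d) / 2 else 0) * u k j) = \<mu> (Suc d) / 2 * (u n j + u (Suc n) j)"
        using split_n[of "\<lambda>k. (if k = n \<or> k = Suc n then \<mu> (Suc d) / 2 else 0) * u k j"] by (simp add: algebra_simps)
      thus ?thesis using u_pair by simp
    qed
    have "\<forall>k\<in>{..d}. 0 \<le> \<mu>' k" unfolding \<mu>'_def using mu(1) by auto
    moreover have "sum \<mu>' {..d} = 1" unfolding \<mu>'_def sum.distrib s1 using mu(2) by simp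
    moreover have "x = (\<lambda>j. \<Sum>k\<in>{..d}. \<mu>' k * u k j)"
    proof
      fix j
      have "(\<Sum>k\<in>{..d}. \<mu>' k * u k j) = (\<Sum>k\<in>{..d}. \<mu> k * u k j)"
        unfolding \<mu>'_def distrib_right sum.distrib s2 by simp
      thus "x j = (\<Sum>k\<in>{..d}. \<mu>' k * u k j)" using mu(3) u_SSn by simp
    qed
    ultimately show "x \<in> {x. \<exists>\<mu>. (\<forall>k\<in>{..d}. 0 \<le> \<mu> k) \<and> sum \<mu> {..d} = 1 \<and> x = (\<lambda>j. \<Sum>k\<in>{..d}. \<mu> k * u k j)}" by blast
  next
    fix x assume "x \<in> {x. \<exists>\<mu>. (\<forall>k\<in>{..d}. 0 \<le> \<mu> k) \<and> sum \<mu> {..d} = 1 \<and> x = (\<lambda>j. \<Sum>k\<in>{..d}. \<mu> k * u k j)}"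
    then obtain \<mu> where mu: "\<forall>k\<in>{..d}. 0 \<le> \<mu> k" "sum \<mu> {..d} = 1" "x = (\<lambda>j. \<Sum>k\<in>{..d}. \<mu> k * u k j)" by blast
    define \<mu>' where "\<mu>' k = (if k \<le> d then \<mu> k else 0)" for k
    have "\<forall>k\<in>{..Suc d}. 0 \<le> \<mu>' k" unfolding \<mu>'_def using mu(1) by auto
    moreover have "sum \<mu>' {..Suc d} = 1" unfolding \<mu>'_def using mu(2) by simp
    moreover have "x = (\<lambda>j. \<Sum>k\<in>{..Suc d}. \<mu>' k * u k j)" unfolding \<mu>'_def using mu(3) by simp
    ultimately show "x \<in> {x. \<exists>\<mu>. (\<forall>k\<in>{..Suc d}. 0 \<le> \<mu> k) \<and> sum \<mu> {..Suc d} = 1 \<and> x = (\<lambda>j. \<Sum>k\<in>{..Suc d}. \<mu> k * u k j)}" by blast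
  qed
qed

lemma u_img: "u ` {..Suc d} = T_verts d \<union> {ahp, - ahp}"
proof -
  have A: "{..Suc d} = {..<n} \<union> {n, Suc n, Suc d}" using d_eq by auto
  have B: "{1..d-1} = Suc ` {..<n}" using d_eq image_Suc_lessThan[of n] by simp
  have C: "(\<lambda>i. \<lambda>j. if j = i - 1 then real (sylvester i) else 0) ` Suc ` {..<n} = u ` {..<n}"
    unfolding image_image u_def q_def by (intro image_cong) auto
  show ?thesis unfolding A T_verts_def B C using u_SSn unfolding u_def by auto
qed

lemma core2_main: "unimod_equiv d (conv (w ` {..d})) (conv (T_verts d \<union> {ah_point d a (int h), - ah_point d a (int h)}))"
  unfolding unimod_equiv_def
proof (rule exI[of _ f], intro conjI)
  show "bij_betw f (Rd d) (Rd d)" unfolding bij_betw_def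
  proof
    show "inj_on f (Rd d)" using f_inj by (intro inj_onI) auto
    show "f ` Rd d = Rd d"
    proof
      show "f ` Rd d \<subseteq> Rd d" using f_R by auto
      show "Rd d \<subseteq> f ` Rd d"
      proof
        fix \<alpha> assume "\<alpha> \<in> Rd d" thus "\<alpha> \<in> f ` Rd d" using f_pre pre_R by (metis image_eqI)
      qed
    qed
  qed
  show "\<exists>(A::nat \<Rightarrow> nat \<Rightarrow> real) (b::pt). \<forall>x\<in>Rd d. \<forall>i<d. f x i = (\<Sum>j<d. A i j * x j) + b i" by (rule f_affine)
  show "f ` Zd d = Zd d"
  proof
    show "f ` Zd d \<subseteq> Zd d" using f_Zd by auto
    show "Zd d \<subseteq> f ` Zd d"
    proof
      fix \<alpha> assume al: "\<alpha> \<in> Zd d"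
      hence "\<alpha> \<in> Rd d" unfolding Zd_def by auto
      hence "\<alpha> = f (pre \<alpha>)" using f_pre by simp
      thus "\<alpha> \<in> f ` Zd d" using pre_Zd[OF al] by (metis image_eqI)
    qed
  qed
  show "f ` conv (w ` {..d}) = conv (T_verts d \<union> {ah_point d a (int h), - ah_point d a (int h)})"
    unfolding f_conv conv_u2[symmetric] u_img ahp_def ..
qed

end

context core begin

lemma core_main:
  "\<exists>(hh::int) (aa::nat \<Rightarrow> int). hh > 0 \<and> (\<forall>i<d - 1. 0 \<le> aa i \<and> aa i < hh) \<and>
     unimod_equiv d (conv (w ` {..d})) (conv (T_verts d \<union> {ah_point d aa hh, - ah_point d aa hh}))"
proof -
  obtain h :: nat and xB where h: "h > 0" and xB: "xB \<in> Zd d" "tau xB = 1 / real h"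
    and Tint: "\<forall>x\<in>Zd d. \<exists>k::int. tau x = of_int k / real h"
    using Tset_props by blast
  define c where "c i = \<lfloor>- real h * rho xB i\<rfloor>" for i
  define y where "y = (\<lambda>j. w n j + (- real h) * (xB j - m j))"
  have wnZ: "w n \<in> Zd d" using wZ[of n] d_eq by simp
  have yZ: "y \<in> Zd d" unfolding y_def by (rule Zd_comb[OF wnZ xB(1) m_Zd]) simp
  have "tau y = 0" unfolding y_def tau_comb tau_m xB(2) wn_Pt tau_Pt using h by simp
  hence ry: "rho y i \<in> \<int>" if "i < n" for i using prim[OF yZ] that by blast
  have c_eq: "of_int (c i) = - real h * rho xB i" if i: "i < n" for i
  proof -
    have "rho y i = - real h * rho xB i" unfolding y_def rho_comb rho_m[OF i] wn_Pt rho_Pt[OF i] by simp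
    thus ?thesis unfolding c_def using ry[OF i] by (metis floor_of_int Ints_cases)
  qed
  interpret C: core2 d w z n h xB c
    by (unfold_locales) (use h xB Tint c_eq in auto)
  show ?thesis
    by (rule exI[of _ "int h"], rule exI[of _ C.a]) (use h C.a_bounds C.core2_main d_eq in auto)
qed

end

lemma sum_atMost_0: fixes d :: nat shows "(\<Sum>k\<le>d. f k) = f 0 + (\<Sum>k\<in>{1..d}. (f k :: real))"
proof -
  have "{..d} = insert 0 {1..d}" by auto
  thus ?thesis by simp
qed

lemma uniq_v:
  assumes aff: "aff_indep d v" and s: "(\<Sum>k\<le>d. a k) = (\<Sum>k\<le>d. b k)"
    and r: "\<And>i. (\<Sum>k\<le>d. a k * v k i) = (\<Sum>k\<le>d. b k * v k i)" and k: "k \<le> d"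
  shows "a k = b k"
proof -
  define c where "c k = a k - b k" for k
  have cs: "(\<Sum>k\<in>{1..d}. c k) = - c 0" using s sum_atMost_0[where d=d and f="c"] unfolding c_def by (simp add: sum_subtractf)
  have cv: "(\<Sum>k\<in>{1..d}. c k * v k i) = - c 0 * v 0 i" for i
    using r[of i] sum_atMost_0[where d=d and f="\<lambda>k. c k * v k i"] unfolding c_def by (simp add: sum_subtractf left_diff_distrib)
  have "\<forall>i. (\<Sum>k\<in>{1..d}. c k * (v k i - v 0 i)) = 0"
  proof
    fix i
    have "(\<Sum>k\<in>{1..d}. c k * (v k i - v 0 i)) = (\<Sum>k\<in>{1..d}. c k * v k i) - (\<Sum>k\<in>{1..d}. c k) * v 0 i"
      by (simp add: right_diff_distrib sum_subtractf sum_distrib_right)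
    thus "(\<Sum>k\<in>{1..d}. c k * (v k i - v 0 i)) = 0" unfolding cv cs by simp
  qed
  hence c0: "\<forall>k\<in>{1..d}. c k = 0" using aff[unfolded aff_indep_def, THEN spec[of _ c]] by (rule mp[rotated])
  hence "c 0 = 0" using cs by simp
  hence "c k = 0" using c0 k by (cases "k = 0") auto
  thus ?thesis unfolding c_def by simp
qed

lemma surj_v:
  assumes aff: "aff_indep d v" and vR: "\<forall>k\<le>d. v k \<in> Rd d" and x: "x \<in> Rd d"
  shows "\<exists>\<mu>. (\<Sum>k\<le>d. \<mu> k) = 1 \<and> (\<forall>i. x i = (\<Sum>k\<le>d. \<mu> k * v k i))"
proof -
  obtain c where c: "\<forall>i. x i - v 0 i = (\<Sum>k\<in>{1..d}. c k * (v k i - v 0 i))" using aff_surj[OF aff vR x] by blast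
  define \<mu> where "\<mu> k = (if k = 0 then 1 - (\<Sum>k\<in>{1..d}. c k) else c k)" for k
  have s1: "(\<Sum>k\<in>{1..d}. \<mu> k) = (\<Sum>k\<in>{1..d}. c k)" unfolding \<mu>_def by (intro sum.cong) auto
  have s2: "(\<Sum>k\<in>{1..d}. \<mu> k * v k i) = (\<Sum>k\<in>{1..d}. c k * v k i)" for i unfolding \<mu>_def by (intro sum.cong) auto
  show ?thesis
  proof (intro exI conjI allI)
    show "(\<Sum>k\<le>d. \<mu> k) = 1" unfolding sum_atMost_0[where d=d and f="\<mu>"] s1 by (simp add: \<mu>_def)
    fix i
    have "(\<Sum>k\<in>{1..d}. c k * (v k i - v 0 i)) = (\<Sum>k\<in>{1..d}. c k * v k i) - (\<Sum>k\<in>{1..d}. c k) * v 0 i"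
      by (simp add: right_diff_distrib sum_subtractf sum_distrib_right)
    thus "x i = (\<Sum>k\<le>d. \<mu> k * v k i)" unfolding sum_atMost_0[where d=d and f="\<lambda>k. \<mu> k * v k i"] s2 using c[rule_format, of i]
      by (simp add: \<mu>_def algebra_simps)
  qed
qed

theorem mainTheorem16:
  fixes d :: nat and v :: "nat \<Rightarrow> pt" and z :: pt
  assumes "d \<ge> 2"
    and "lattice_simplex d v"
    and "interior_d d (conv (v ` {..d})) \<inter> Zd d = {z}"
    and "\<exists>\<sigma>. bij_betw \<sigma> {..d} {..d} \<and> is_bary d v z (\<lambda>k. target_bary d (\<sigma> k))"
  shows "\<exists>(h::int) (a::nat \<Rightarrow> int). h > 0 \<and> (\<forall>i<d - 1. 0 \<le> a i \<and> a i < h) \<and>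
           unimod_equiv d (conv (v ` {..d}))
             (conv (T_verts d \<union> {ah_point d a h, - ah_point d a h}))"
proof -
  obtain \<sigma> where \<sigma>: "bij_betw \<sigma> {..d} {..d}" and zb: "is_bary d v z (\<lambda>k. target_bary d (\<sigma> k))"
    using assms(4) by blast
  have vZ: "\<forall>k\<le>d. v k \<in> Zd d" and aff: "aff_indep d v" using assms(2) unfolding lattice_simplex_def by auto
  have vR: "\<forall>k\<le>d. v k \<in> Rd d" using vZ unfolding Zd_def by auto
  define \<iota> where "\<iota> = inv_into {..d} \<sigma>"
  have \<iota>: "bij_betw \<iota> {..d} {..d}" unfolding \<iota>_def by (rule bij_betw_inv_into[OF \<sigma>])
  have \<iota>\<sigma>: "\<iota> (\<sigma> j) = j" if "j \<le> d" for j
    unfolding \<iota>_def using \<sigma> that by (simp add: bij_betw_def inv_into_f_f)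
  have \<sigma>\<iota>: "\<sigma> (\<iota> k) = k" if "k \<le> d" for k
    unfolding \<iota>_def using \<sigma> that by (metis atMost_iff bij_betw_def f_inv_into_f)
  have \<iota>d: "\<iota> k \<le> d" if "k \<le> d" for k using \<iota> that unfolding bij_betw_def by auto
  have \<sigma>d: "\<sigma> k \<le> d" if "k \<le> d" for k using \<sigma> that unfolding bij_betw_def by auto
  define w where "w k = v (\<iota> k)" for k
  have w\<sigma>: "w (\<sigma> j) = v j" if "j \<le> d" for j unfolding w_def using \<iota>\<sigma>[OF that] by simp
  have reidx: "(\<Sum>j\<le>d. g (\<sigma> j)) = (\<Sum>k\<le>d. g k)" for g :: "nat \<Rightarrow> real"
    by (rule sum.reindex_bij_betw[OF \<sigma>])
  have reidx2: "(\<Sum>j\<le>d. g (\<iota> j)) = (\<Sum>k\<le>d. g k)" for g :: "nat \<Rightarrow> real"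
    by (rule sum.reindex_bij_betw[OF \<iota>])
  have wv: "(\<Sum>k\<le>d. a k * w k i) = (\<Sum>j\<le>d. a (\<sigma> j) * v j i)" for a i
  proof -
    have "(\<Sum>j\<le>d. a (\<sigma> j) * v j i) = (\<Sum>j\<le>d. a (\<sigma> j) * w (\<sigma> j) i)" using w\<sigma> by (intro sum.cong) auto
    also have "\<dots> = (\<Sum>k\<le>d. a k * w k i)" by (rule reidx)
    finally show ?thesis by simp
  qed
  have wimg: "w ` {..d} = v ` {..d}"
  proof -
    have "w ` {..d} = v ` (\<iota> ` {..d})" unfolding w_def by auto
    also have "\<iota> ` {..d} = {..d}" using \<iota> unfolding bij_betw_def by simp
    finally show ?thesis .
  qed
  interpret core d w z "d - 1"
  proof
    show "2 \<le> d" by (rule assms(1))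
    show "d = Suc (d - 1)" using assms(1) by simp
    show "w k \<in> Zd d" if "k \<le> d" for k unfolding w_def using vZ \<iota>d[OF that] by simp
    show "a k = b k" if s: "(\<Sum>k\<le>d. a k) = (\<Sum>k\<le>d. b k)" and r: "\<And>i. (\<Sum>k\<le>d. a k * w k i) = (\<Sum>k\<le>d. b k * w k i)"
      and k: "k \<le> d" for a b k
    proof -
      have "a (\<sigma> (\<iota> k)) = b (\<sigma> (\<iota> k))"
      proof (rule uniq_v[OF aff _ _ \<iota>d[OF k], of "\<lambda>j. a (\<sigma> j)" "\<lambda>j. b (\<sigma> j)"])
        show "(\<Sum>k\<le>d. a (\<sigma> k)) = (\<Sum>k\<le>d. b (\<sigma> k))" using s reidx by simp
        fix i show "(\<Sum>k\<le>d. a (\<sigma> k) * v k i) = (\<Sum>k\<le>d. b (\<sigma> k) * v k i)" using r[of i] wv by simp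
      qed
      thus ?thesis using \<sigma>\<iota>[OF k] by simp
    qed
    show "\<exists>\<mu>. (\<Sum>k\<le>d. \<mu> k) = 1 \<and> (\<forall>i. x i = (\<Sum>k\<le>d. \<mu> k * w k i))" if x: "x \<in> Rd d" for x
    proof -
      obtain \<mu> where mu: "(\<Sum>k\<le>d. \<mu> k) = 1" "\<forall>i. x i = (\<Sum>k\<le>d. \<mu> k * v k i)" using surj_v[OF aff vR x] by blast
      show ?thesis
      proof (intro exI conjI allI)
        show "(\<Sum>k\<le>d. \<mu> (\<iota> k)) = 1" using mu(1) reidx2 by simp
        fix i
        have "(\<Sum>k\<le>d. \<mu> (\<iota> k) * w k i) = (\<Sum>k\<le>d. \<mu> k * v k i)"
          unfolding w_def using reidx2[of "\<lambda>k. \<mu> k * v k i"] .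
        thus "x i = (\<Sum>k\<le>d. \<mu> (\<iota> k) * w k i)" using mu(2) by simp
      qed
    qed
    show "interior_d d (conv (w ` {..d})) \<inter> Zd d = {z}" unfolding wimg by (rule assms(3))
    show "z i = (\<Sum>k\<le>d. target_bary d k * w k i)" for i
      using zb wv[of "target_bary d" i] unfolding is_bary_def by simp
    show "(\<Sum>k\<le>d. target_bary d k) = 1" using zb reidx[of "target_bary d"] unfolding is_bary_def by simp
  qed
  show ?thesis using core_main unfolding wimg .
qed

end
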